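(* Let $\mathbb X$ be a separable reflexive Banach space, let $x_1,\ldots,x_k\in\mathbb X$, and let $\hat x_\ast$ be any minimizer of $y\mapsto\sum_{j=1}^k\|y-x_j\|$ over $y\in\mathrm{co}(x_1,\ldots,x_k)$, the convex hull of $\{x_1,\ldots,x_k\}$. Fix $\alpha\in(0,\tfrac12)$ and $r>0$, and set $C_\alpha=\frac{2(1-\alpha)}{1-2\alpha}$. If $z\in\mathrm{co}(x_1,\ldots,x_k)$ satisfies $\|\hat x_\ast-z\|>C_\alpha r$, then there exists $J\subseteq\{1,\ldots,k\}$ with $|J|>\alpha k$ such that $\|x_j-z\|>r$ for all $j\in J$. *)

theory Defs
  imports "HOL-Analysis.Analysis"
begin

definition separable_space :: "'a::real_normed_vector itself \<Rightarrow> bool" where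
  "separable_space _ \<longleftrightarrow> (\<exists>D::'a set. countable D \<and> closure D = UNIV)"

definition reflexive_space :: "'a::real_normed_vector itself \<Rightarrow> bool" where
  "reflexive_space _ \<longleftrightarrow>
     (\<forall>\<Phi> :: ('a \<Rightarrow>\<^sub>L real) \<Rightarrow>\<^sub>L real. \<exists>x::'a. \<forall>f. blinfun_apply \<Phi> f = blinfun_apply f x)"

end

theory Submission
  imports Defs
begin

theorem mainTheorem3:
  fixes x :: "nat \<Rightarrow> 'a::banach" and k :: nat and xhat z :: 'a and \<alpha> r :: real
  assumes "separable_space TYPE('a)"
    and "reflexive_space TYPE('a)"
    and "xhat \<in> convex hull (x ` {1..k})"
    and "\<forall>y \<in> convex hull (x ` {1..k}). (\<Sum>j=1..k. norm (xhat - x j)) \<le> (\<Sum>j=1..k. norm (y - x j))"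
    and "0 < \<alpha>" and "\<alpha> < 1/2" and "0 < r"
    and "z \<in> convex hull (x ` {1..k})"
    and "norm (xhat - z) > (2 * (1 - \<alpha>) / (1 - 2 * \<alpha>)) * r"
  shows "\<exists>J \<subseteq> {1..k}. real (card J) > \<alpha> * real k \<and> (\<forall>j\<in>J. norm (x j - z) > r)"
proof (rule ccontr)
  assume neg: "\<not> ?thesis"
  define J where "J = {j\<in>{1..k}. norm (x j - z) > r}"
  define I where "I = {1..k} - J"
  define D where "D = norm (xhat - z)"
  have JI: "J \<subseteq> {1..k}" "I \<union> J = {1..k}" "I \<inter> J = {}" "finite I" "finite J"
    by (auto simp: J_def I_def)
  have m: "real (card J) \<le> \<alpha> * real k" proof (rule ccontr)
    assume "\<not> ?thesis"
    hence "real (card J) > \<alpha> * real k" by simp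
    thus False using neg JI(1) by (auto simp: J_def)
  qed
  have cI: "real (card I) = real k - real (card J)"
    using card_Diff_subset[OF JI(5) JI(1)] card_mono[OF _ JI(1)] by (simp add: I_def of_nat_diff)
  have kpos: "k > 0" using assms(8) by (cases k) auto
  have h: "(\<Sum>j=1..k. norm (xhat - x j)) \<le> (\<Sum>j=1..k. norm (z - x j))" using assms(4,8) by blast
  have split: "\<And>f. (\<Sum>j=1..k. f j) = (\<Sum>j\<in>I. f j) + (\<Sum>j\<in>J. f j)"
    using sum.union_disjoint[OF JI(4) JI(5) JI(3)] JI(2) by simp
  have lowI: "\<And>j. j \<in> I \<Longrightarrow> D - r \<le> norm (xhat - x j)"
  proof -
    fix j assume "j \<in> I"
    hence "norm (x j - z) \<le> r" by (auto simp: I_def J_def)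
    moreover have "D \<le> norm (xhat - x j) + norm (x j - z)" unfolding D_def
      by (metis norm_triangle_ineq diff_add_cancel add_diff_eq)
    ultimately show "D - r \<le> norm (xhat - x j)" by linarith
  qed
  have upI: "\<And>j. j \<in> I \<Longrightarrow> norm (z - x j) \<le> r"
    by (auto simp: I_def J_def norm_minus_commute)
  have lowJ: "\<And>j. norm (z - x j) - D \<le> norm (xhat - x j)"
  proof -
    fix j
    have "norm (z - x j) \<le> norm (z - xhat) + norm (xhat - x j)"
      by (metis norm_triangle_ineq diff_add_cancel add_diff_eq)
    thus "norm (z - x j) - D \<le> norm (xhat - x j)" by (simp add: D_def norm_minus_commute)
  qed
  have s1: "(\<Sum>j\<in>I. norm (xhat - x j)) \<ge> real (card I) * (D - r)"
    using sum_mono[of I "\<lambda>_. D - r" "\<lambda>j. norm (xhat - x j)"] lowI by simp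
  have s2: "(\<Sum>j\<in>J. norm (xhat - x j)) \<ge> (\<Sum>j\<in>J. norm (z - x j)) - real (card J) * D"
    using sum_mono[of J "\<lambda>j. norm (z - x j) - D" "\<lambda>j. norm (xhat - x j)"] lowJ
    by (simp add: sum_subtractf)
  have s3: "(\<Sum>j\<in>I. norm (z - x j)) \<le> real (card I) * r"
    using sum_mono[of I "\<lambda>j. norm (z - x j)" "\<lambda>_. r"] upI by simp
  have key: "D * (real k - 2 * real (card J)) \<le> 2 * r * (real k - real (card J))"
    using h s1 s2 s3 cI unfolding split by (simp add: algebra_simps)
  define m where "m = real (card J)"
  define kk where "kk = real k"
  have kk: "kk > 0" using kpos by (simp add: kk_def)
  have pos: "kk - 2 * m > 0"
  proof -
    have "2 * m \<le> 2 * \<alpha> * kk" using m by (simp add: m_def kk_def)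
    moreover have "2 * \<alpha> * kk < kk" using assms(6) kk by simp
    ultimately show ?thesis by linarith
  qed
  have a: "(kk - m) * (1 - 2*\<alpha>) \<le> (1 - \<alpha>) * (kk - 2*m)"
    using m by (simp add: m_def kk_def algebra_simps)
  have "D * (kk - 2*m) * (1 - 2*\<alpha>) \<le> 2 * r * (kk - m) * (1 - 2*\<alpha>)"
    using key assms(6) by (intro mult_right_mono) (auto simp: m_def kk_def)
  also have "\<dots> \<le> 2 * r * (1 - \<alpha>) * (kk - 2*m)"
    using a assms(7) mult_left_mono[OF a, of "2*r"] by (simp add: algebra_simps)
  finally have "(D * (1 - 2*\<alpha>)) * (kk - 2*m) \<le> (2 * r * (1 - \<alpha>)) * (kk - 2*m)"
    by (simp add: algebra_simps)
  hence "D * (1 - 2*\<alpha>) \<le> 2 * r * (1 - \<alpha>)" using pos by simp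
  moreover have "D > (2 * (1 - \<alpha>) / (1 - 2 * \<alpha>)) * r" using assms(9) by (simp add: D_def)
  hence "D * (1 - 2*\<alpha>) > 2 * r * (1 - \<alpha>)" using assms(6)
    by (simp add: field_simps)
  ultimately show False by linarith
qed

end
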